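(* Let $F^a:\mathbb{R}^n\times\mathbb{R}^m\times[0,\infty)\to\mathbb{R}^n$ be an open-loop DT model and $U,V:\mathbb{R}^n\times[0,\infty)\to\mathbb{R}^m$ be control laws. Suppose that (i) $F^a$ is StLC, (ii) $U$ is StL, and (iii) the pair $(U,V)$ is StC. Then $\bar F^a_U$ is EPC with $\bar F^a_V$, where $\bar F^a_U(x,T):=F^a(x,U(x,T),T)$ and $\bar F^a_V(x,T):=F^a(x,V(x,T),T)$.
   Context: $\mathcal{K}_\infty$: continuous, strictly increasing, unbounded $\rho:\mathbb{R}_{\ge0}\to\mathbb{R}_{\ge0}$ with $\rho(0)=0$. StLC: an open-loop DT model $F^a$ is Semiglobally small-time Lipschitz Consistent if for each $M,E\ge0$ there exist $K=K(M,E)>0$, $T^*=T^*(M,E)>0$ such that $|F^a(x,u,T)-F^a(y,v,T)|\le(1+KT)|x-y|+KT|u-v|$ for all $|x|,|y|\le M$, $|u|,|v|\le E$, $T\in[0,T^* )$. StL: $U$ is Semiglobally small-time Lipschitz if for each $M\ge0$ there exist $K=K(M)>0$ and $T^*=T^*(M)>0$, with $T^*(\cdot)$ nonincreasing, such that for all $|x|,|y|\le M$ and $T\in[0,T^* )$: $U(0,T)=0$ and $|U(x,T)-U(y,T)|\le K|x-y|$. StC: the pair $(U,V)$ is Semiglobally small-time convergent Consistent if for each $M\ge0$ there exist $\rho\in\mathcal{K}_\infty$ and $T^*=T^*(M)>0$ such that $|U(x,T)-V(x,T)|\le\rho(T)|x|$ for all $|x|\le M$, $T\in[0,T^* )$.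 EPC: a closed-loop model $\bar F^a:\mathbb{R}^n\times(0,\infty)\to\mathbb{R}^n$ is Equilibrium-Preserving Consistent with $\bar F^b$ if for each $M\ge0$ there exist $K=K(M)>0$, $T^*=T^*(M)>0$ and $\rho\in\mathcal{K}_\infty$ such that $|\bar F^a(x,T)-\bar F^b(y,T)|\le(1+KT)|x-y|+T\rho(T)\max\{|x|,|y|\}$ for all $|x|,|y|\le M$, $T\in(0,T^* )$. *)

theory Defs
  imports "HOL-Analysis.Analysis"
begin

definition class_K_inf :: "(real \<Rightarrow> real) \<Rightarrow> bool" where
  "class_K_inf \<rho> \<longleftrightarrow> continuous_on {0..} \<rho> \<and> strict_mono_on {0..} \<rho> \<and> \<rho> 0 = 0
     \<and> (\<forall>t\<ge>0. \<rho> t \<ge> 0) \<and> (\<forall>B. \<exists>t\<ge>0. \<rho> t > B)"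

definition StLC :: "('n::euclidean_space \<Rightarrow> 'm::euclidean_space \<Rightarrow> real \<Rightarrow> 'n) \<Rightarrow> bool" where
  "StLC F \<longleftrightarrow> (\<forall>M\<ge>0. \<forall>E\<ge>0. \<exists>K>0. \<exists>Ts>0. \<forall>x y u v T.
      norm x \<le> M \<longrightarrow> norm y \<le> M \<longrightarrow> norm u \<le> E \<longrightarrow> norm v \<le> E \<longrightarrow> 0 \<le> T \<longrightarrow> T < Ts \<longrightarrow>
      norm (F x u T - F y v T) \<le> (1 + K * T) * norm (x - y) + K * T * norm (u - v))"

definition StL :: "('n::euclidean_space \<Rightarrow> real \<Rightarrow> 'm::euclidean_space) \<Rightarrow> bool" where
  "StL U \<longleftrightarrow> (\<exists>Ts :: real \<Rightarrow> real. (\<forall>M1 M2. 0 \<le> M1 \<longrightarrow> M1 \<le> M2 \<longrightarrow> Ts M2 \<le> Ts M1) \<and>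
      (\<forall>M\<ge>0. Ts M > 0 \<and> (\<exists>K>0. \<forall>x y T. norm x \<le> M \<longrightarrow> norm y \<le> M \<longrightarrow> 0 \<le> T \<longrightarrow> T < Ts M \<longrightarrow>
         U 0 T = 0 \<and> norm (U x T - U y T) \<le> K * norm (x - y))))"

definition StC :: "('n::euclidean_space \<Rightarrow> real \<Rightarrow> 'm::euclidean_space) \<Rightarrow> ('n \<Rightarrow> real \<Rightarrow> 'm) \<Rightarrow> bool" where
  "StC U V \<longleftrightarrow> (\<forall>M\<ge>0. \<exists>\<rho> Ts. class_K_inf \<rho> \<and> Ts > 0 \<and> (\<forall>x T. norm x \<le> M \<longrightarrow> 0 \<le> T \<longrightarrow> T < Ts \<longrightarrow>
      norm (U x T - V x T) \<le> \<rho> T * norm x))"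

definition EPC :: "('n::euclidean_space \<Rightarrow> real \<Rightarrow> 'n) \<Rightarrow> ('n \<Rightarrow> real \<Rightarrow> 'n) \<Rightarrow> bool" where
  "EPC Fa Fb \<longleftrightarrow> (\<forall>M\<ge>0. \<exists>K>0. \<exists>Ts>0. \<exists>\<rho>. class_K_inf \<rho> \<and> (\<forall>x y T. norm x \<le> M \<longrightarrow> norm y \<le> M \<longrightarrow> 0 < T \<longrightarrow> T < Ts \<longrightarrow>
      norm (Fa x T - Fb y T) \<le> (1 + K * T) * norm (x - y) + T * \<rho> T * max (norm x) (norm y)))"

end

theory Submission
  imports Defs
begin

lemma K_scale:
  assumes "class_K_inf \<rho>" "c > 0"
  shows "class_K_inf (\<lambda>t. c * \<rho> t)"
  unfolding class_K_inf_def
proof (intro conjI allI impI)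
  show "continuous_on {0..} (\<lambda>t. c * \<rho> t)"
    using assms unfolding class_K_inf_def by (intro continuous_intros) auto
  show "strict_mono_on {0..} (\<lambda>t. c * \<rho> t)"
    using assms unfolding class_K_inf_def strict_mono_on_def by auto
  show "c * \<rho> 0 = 0" using assms unfolding class_K_inf_def by auto
  fix t :: real assume "0 \<le> t" then show "0 \<le> c * \<rho> t"
    using assms unfolding class_K_inf_def by auto
next
  fix B :: real
  obtain t where "t \<ge> 0" "\<rho> t > B / c" using assms unfolding class_K_inf_def by blast
  then have "c * \<rho> t > B" using assms by (simp add: field_simps)
  then show "\<exists>t\<ge>0. B < c * \<rho> t" using \<open>t \<ge> 0\<close> by blast
qed

theorem theorem2:
  fixes Fa :: "real^'n \<Rightarrow> real^'m \<Rightarrow> real \<Rightarrow> real^'n"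
    and U V :: "real^'n \<Rightarrow> real \<Rightarrow> real^'m"
  assumes "StLC Fa" and "StL U" and "StC U V"
  shows "EPC (\<lambda>x T. Fa x (U x T) T) (\<lambda>x T. Fa x (V x T) T)"
  unfolding EPC_def
proof (intro allI impI)
  fix M :: real assume M: "M \<ge> 0"
  obtain TU where TU: "\<forall>M\<ge>0. TU M > 0 \<and> (\<exists>K>0. \<forall>x y T. norm x \<le> M \<longrightarrow> norm y \<le> M \<longrightarrow> 0 \<le> T \<longrightarrow> T < TU M \<longrightarrow>
         U 0 T = 0 \<and> norm (U x T - U y T) \<le> K * norm (x - y))"
    using assms(2) unfolding StL_def by blast
  obtain KU where KU: "KU > 0" "\<And>x y T. norm x \<le> M \<Longrightarrow> norm y \<le> M \<Longrightarrow> 0 \<le> T \<Longrightarrow> T < TU M \<Longrightarrow>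
         U 0 T = 0 \<and> norm (U x T - U y T) \<le> KU * norm (x - y)" and TUp: "TU M > 0"
    using TU M by blast
  obtain \<rho> TC where rho: "class_K_inf \<rho>" "TC > 0" "\<And>x T. norm x \<le> M \<Longrightarrow> 0 \<le> T \<Longrightarrow> T < TC \<Longrightarrow>
      norm (U x T - V x T) \<le> \<rho> T * norm x"
    using assms(3) M unfolding StC_def by blast
  have rmono: "\<rho> T \<le> \<rho> TC" if "0 \<le> T" "T < TC" for T
    using rho(1) that unfolding class_K_inf_def strict_mono_on_def by (auto intro: less_imp_le)
  have rpos: "\<rho> T \<ge> 0" if "0 \<le> T" for T using rho(1) that unfolding class_K_inf_def by auto
  define E where "E = KU * M + \<rho> TC * M"
  have E0: "E \<ge> 0" using KU M rpos[of TC] rho(2) unfolding E_def by simp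
  have "\<forall>M\<ge>0. \<forall>E\<ge>0. \<exists>K>0. \<exists>Ts>0. \<forall>x y u v T.
      norm x \<le> M \<longrightarrow> norm y \<le> M \<longrightarrow> norm u \<le> E \<longrightarrow> norm v \<le> E \<longrightarrow> 0 \<le> T \<longrightarrow> T < Ts \<longrightarrow>
      norm (Fa x u T - Fa y v T) \<le> (1 + K * T) * norm (x - y) + K * T * norm (u - v)"
    using assms(1) unfolding StLC_def .
  then have "\<exists>K>0. \<exists>Ts>0. \<forall>x y u v T.
      norm x \<le> M \<longrightarrow> norm y \<le> M \<longrightarrow> norm u \<le> E \<longrightarrow> norm v \<le> E \<longrightarrow> 0 \<le> T \<longrightarrow> T < Ts \<longrightarrow>
      norm (Fa x u T - Fa y v T) \<le> (1 + K * T) * norm (x - y) + K * T * norm (u - v)"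
    using M E0 by simp
  then obtain KF TF where KF12: "KF > 0" "TF > 0" and H: "\<forall>x y u v T.
      norm x \<le> M \<longrightarrow> norm y \<le> M \<longrightarrow> norm u \<le> E \<longrightarrow> norm v \<le> E \<longrightarrow> 0 \<le> T \<longrightarrow> T < TF \<longrightarrow>
      norm (Fa x u T - Fa y v T) \<le> (1 + KF * T) * norm (x - y) + KF * T * norm (u - v)"
    by blast
  note KF = KF12 H[rule_format]
  define Ts where "Ts = min TF (min (TU M) TC)"
  have Ts: "Ts > 0" using KF TUp rho unfolding Ts_def by simp
  show "\<exists>K>0. \<exists>Ts>0. \<exists>\<rho>. class_K_inf \<rho> \<and> (\<forall>x y T. norm x \<le> M \<longrightarrow> norm y \<le> M \<longrightarrow> 0 < T \<longrightarrow> T < Ts \<longrightarrow>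
      norm (Fa x (U x T) T - Fa y (V y T) T) \<le> (1 + K * T) * norm (x - y) + T * \<rho> T * max (norm x) (norm y))"
  proof (intro exI conjI allI impI)
    show "KF * (1 + KU) > 0" using KF KU by simp
    show "Ts > 0" by (rule Ts)
    show "class_K_inf (\<lambda>t. KF * \<rho> t)" by (rule K_scale[OF rho(1) KF(1)])
    fix x y :: "real^'n" and T :: real
    assume x: "norm x \<le> M" and y: "norm y \<le> M" and T: "0 < T" "T < Ts"
    have T1: "T < TF" "T < TU M" "T < TC" using T unfolding Ts_def by auto
    have U0: "U 0 T = 0" using KU(2)[of x y T] x y T T1 by auto
    have Ux: "norm (U x T) \<le> KU * M"
    proof -
      have "norm (U x T - U 0 T) \<le> KU * norm (x - 0)" using KU(2)[of x 0 T] x M T T1 by auto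
      also have "\<dots> \<le> KU * M" using x KU by (simp add: mult_left_mono)
      finally show ?thesis using U0 by simp
    qed
    have Uy: "norm (U y T) \<le> KU * M"
    proof -
      have "norm (U y T - U 0 T) \<le> KU * norm (y - 0)" using KU(2)[of y 0 T] y M T T1 by auto
      also have "\<dots> \<le> KU * M" using y KU by (simp add: mult_left_mono)
      finally show ?thesis using U0 by simp
    qed
    have UVy: "norm (U y T - V y T) \<le> \<rho> T * norm y" using rho(3)[of y T] y T T1 by auto
    have rT: "0 \<le> \<rho> T" "\<rho> T \<le> \<rho> TC" using rpos rmono T T1 by auto
    have rTC: "0 \<le> \<rho> TC" using rpos rho(2) by simp
    have "\<rho> T * norm y \<le> \<rho> TC * M" by (rule mult_mono[OF rT(2) y rTC norm_ge_zero])
    then have Vy: "norm (V y T) \<le> E"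
      using Uy UVy norm_triangle_ineq4[of "U y T" "U y T - V y T"] unfolding E_def by simp
    have "0 \<le> \<rho> TC * M" using rTC M by simp
    then have Ux': "norm (U x T) \<le> E" using Ux unfolding E_def by linarith
    have F: "norm (Fa x (U x T) T - Fa y (V y T) T) \<le> (1 + KF * T) * norm (x - y) + KF * T * norm (U x T - V y T)"
      using KF(3)[OF x y Ux' Vy] T T1 by auto
    have "norm (U x T - V y T) \<le> norm (U x T - U y T) + norm (U y T - V y T)"
    proof -
      have "U x T - V y T = (U x T - U y T) + (U y T - V y T)" by simp
      then show ?thesis by (metis norm_triangle_ineq)
    qed
    also have "\<dots> \<le> KU * norm (x - y) + \<rho> T * max (norm x) (norm y)"
    proof -
      have a: "norm (U x T - U y T) \<le> KU * norm (x - y)" using KU(2)[of x y T] x y T T1 by auto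
      have b: "\<rho> T * norm y \<le> \<rho> T * max (norm x) (norm y)" using rT(1) by (intro mult_left_mono) auto
      show ?thesis using a b UVy by linarith
    qed
    finally have UV: "norm (U x T - V y T) \<le> KU * norm (x - y) + \<rho> T * max (norm x) (norm y)" .
    have "KF * T * norm (U x T - V y T) \<le> KF * T * (KU * norm (x - y) + \<rho> T * max (norm x) (norm y))"
      using UV KF T by (intro mult_left_mono) auto
    with F show "norm (Fa x (U x T) T - Fa y (V y T) T) \<le> (1 + KF * (1 + KU) * T) * norm (x - y) + T * (KF * \<rho> T) * max (norm x) (norm y)"
      by (simp add: algebra_simps)
  qed
qed

end
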